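(* For every lattice point $p\in\mathbb Z^n$: $p\in P_G^{-}(y_1,\dots,y_m)$ if and only if $p+e_1$ is a good point of $P_G(y_1,\dots,y_m)$.
   Context: Let $m,n$ be positive integers and $G\subseteq K_{m,n}$ a bipartite graph without isolated vertices, with left vertices $1,\dots,m$ and right vertices $\bar1,\dots,\bar n$. For $i\in[m]$ let $I_i\subseteq[n]$ be the set of $j$ with $(i,\bar j)$ an edge of $G$. For $I\subseteq[n]$ let $\Delta_I=\mathrm{conv}(e_k:k\in I)\subset\mathbb R^n$. For nonnegative integers $y_1,\dots,y_m$, $P_G=P_G(y_1,\dots,y_m)=y_1\Delta_{I_1}+\cdots+y_m\Delta_{I_m}$ (Minkowski sum); it lies in the hyperplane $H=\{x:\sum_kx_k=\sum_jy_j\}$. The trimmed generalized permutohedron is $P_G^-(y_1,\dots,y_m)=\{x\in\mathbb R^n: x+\Delta_{[n]}\subseteq P_G\}$. Fix $c>0$ sufficiently large and let $\infty_1=(\sum_jy_j+(n-1)c,-c,\dots,-c)\in H$. For a polytope $Q\subseteq H$, a facet $F$ of $Q$ is negative if the hyperplane (inside $H$) defining $F$ separates $\infty_1$ from the interior of $Q$, and positive otherwise. A point of $Q$ is good if it lies on no positive facet of $Q$.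
   Formalization: The polytope $P_G(y_1,\dots,y_m)$ is also assumed to be full-dimensional in the hyperplane H, that is of affine dimension n-1. The statement above fails without it. *)

theory Defs
  imports "HOL-Analysis.Analysis"
begin

text \<open>Points of R^n are vectors of type real^'n, n = CARD('n).
  Left vertices are 1..m; I i is the set of right neighbours of left vertex i.\<close>

definition simplexI :: "'n::finite set \<Rightarrow> (real^'n) set" where
  "simplexI J = convex hull {axis k 1 | k. k \<in> J}"

definition PG :: "nat \<Rightarrow> (nat \<Rightarrow> 'n::finite set) \<Rightarrow> (nat \<Rightarrow> nat) \<Rightarrow> (real^'n) set" where
  "PG m I y = {(\<Sum>i\<in>{1..m}. z i) | z. \<forall>i\<in>{1..m}. z i \<in> (\<lambda>v. real (y i) *\<^sub>R v) ` simplexI (I i)}"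

definition PG_trim :: "nat \<Rightarrow> (nat \<Rightarrow> 'n::finite set) \<Rightarrow> (nat \<Rightarrow> nat) \<Rightarrow> (real^'n) set" where
  "PG_trim m I y = {x. (\<lambda>v. x + v) ` simplexI (UNIV :: 'n set) \<subseteq> PG m I y}"

definition Hyp :: "nat \<Rightarrow> (nat \<Rightarrow> nat) \<Rightarrow> (real^'n::finite) set" where
  "Hyp m y = {x. (\<Sum>k\<in>UNIV. x $ k) = real (\<Sum>j\<in>{1..m}. y j)}"

text \<open>The point infinity_1; the coordinate labelled 1 is k1.\<close>
definition infty1 :: "nat \<Rightarrow> (nat \<Rightarrow> nat) \<Rightarrow> real \<Rightarrow> 'n::finite \<Rightarrow> real^'n" where
  "infty1 m y c k1 = (\<chi> k. if k = k1
      then real (\<Sum>j\<in>{1..m}. y j) + (real CARD('n) - 1) * c else - c)"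

definition negative_facet :: "(real^'n::finite) set \<Rightarrow> (real^'n) \<Rightarrow> (real^'n) set \<Rightarrow> (real^'n) set \<Rightarrow> bool" where
  "negative_facet H w Q F \<longleftrightarrow> F facet_of Q \<and>
     (\<exists>a b. aff_dim (H \<inter> {x. a \<bullet> x = b}) = aff_dim H - 1 \<and>
            Q \<subseteq> {x. a \<bullet> x \<le> b} \<and> F = Q \<inter> {x. a \<bullet> x = b} \<and>
            rel_interior Q \<subseteq> {x. a \<bullet> x < b} \<and> a \<bullet> w > b)"

definition positive_facet :: "(real^'n::finite) set \<Rightarrow> (real^'n) \<Rightarrow> (real^'n) set \<Rightarrow> (real^'n) set \<Rightarrow> bool" where
  "positive_facet H w Q F \<longleftrightarrow> F facet_of Q \<and> \<not> negative_facet H w Q F"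

definition good_point :: "(real^'n::finite) set \<Rightarrow> (real^'n) \<Rightarrow> (real^'n) set \<Rightarrow> (real^'n) \<Rightarrow> bool" where
  "good_point H w Q x \<longleftrightarrow> x \<in> Q \<and> (\<forall>F. positive_facet H w Q F \<longrightarrow> x \<notin> F)"

end

theory Submission
  imports Defs
begin


definition ind :: "'n::finite set \<Rightarrow> real^'n" where
  "ind S = (\<chi> k. if k \<in> S then 1 else 0)"

lemma ind_inner: "ind S \<bullet> x = (\<Sum>k\<in>S. x $ k)"
proof -
  have "ind S \<bullet> x = (\<Sum>k\<in>UNIV. if k \<in> S then x$k else 0)"
    unfolding inner_vec_def ind_def by (intro sum.cong) auto
  also have "\<dots> = (\<Sum>k\<in>S. x $ k)"
    by (simp add: sum.If_cases)
  finally show ?thesis .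
qed

definition fS :: "nat \<Rightarrow> (nat \<Rightarrow> 'n::finite set) \<Rightarrow> (nat \<Rightarrow> nat) \<Rightarrow> 'n set \<Rightarrow> real" where
  "fS m I y S = real (\<Sum>i\<in>{i\<in>{1..m}. I i \<inter> S \<noteq> {}}. y i)"

lemma Hyp_eq: "Hyp m y = {x::real^'n::finite. ind UNIV \<bullet> x = real (\<Sum>j\<in>{1..m}. y j)}"
  by (simp add: Hyp_def ind_inner)

lemma ind_nz: "S \<noteq> {} \<Longrightarrow> ind S \<noteq> 0"
  by (auto simp: ind_def vec_eq_iff)

lemma simplexI_props:
  assumes "s \<in> simplexI J"
  shows "(\<forall>k. 0 \<le> s$k) \<and> (\<forall>k. k \<notin> J \<longrightarrow> s$k = 0) \<and> (\<Sum>k\<in>UNIV. s$k) = 1"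
proof -
  let ?T = "{s::real^'a. (\<forall>k. 0 \<le> s$k) \<and> (\<forall>k. k \<notin> J \<longrightarrow> s$k = 0) \<and> (\<Sum>k\<in>UNIV. s$k) = 1}"
  have "convex ?T"
    unfolding convex_def
  proof (intro ballI allI impI)
    fix x yy :: "real^'a" and u v :: real
    assume x: "x \<in> ?T" and yy: "yy \<in> ?T" and uv: "0 \<le> u" "0 \<le> v" "u + v = 1"
    have "(\<Sum>k\<in>UNIV. (u *\<^sub>R x + v *\<^sub>R yy) $ k) = u * (\<Sum>k\<in>UNIV. x$k) + v * (\<Sum>k\<in>UNIV. yy$k)"
      by (simp add: sum.distrib sum_distrib_left)
    then show "u *\<^sub>R x + v *\<^sub>R yy \<in> ?T" using x yy uv by auto
  qed
  moreover have "{axis k 1 | k. k \<in> J} \<subseteq> ?T"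
    by (auto simp: axis_def)
  ultimately have "simplexI J \<subseteq> ?T"
    unfolding simplexI_def by (rule hull_minimal[rotated])
  then show ?thesis using assms by blast
qed

lemma axis_in_simplexI: "k \<in> J \<Longrightarrow> axis k 1 \<in> simplexI J"
  unfolding simplexI_def by (rule hull_inc) blast

lemma finite_axes: "finite {axis k (1::real) | k. k \<in> (J::'n::finite set)}"
proof -
  have "{axis k (1::real) | k. k \<in> J} = (\<lambda>k. axis k 1) ` J" by auto
  then show ?thesis by simp
qed

lemma polytope_plus:
  assumes "polytope A" "polytope B" shows "polytope (A + B)"
proof -
  obtain V W where "finite V" "A = convex hull V" "finite W" "B = convex hull W"
    using assms by (auto simp: polytope_def)
  then show ?thesis
    by (auto simp: polytope_def convex_hull_set_plus intro!: exI[of _ "V + W"] finite_set_plus)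
qed

lemma polytope_msum:
  fixes K :: "nat \<Rightarrow> 'a::euclidean_space set"
  assumes "finite A" "\<And>i. i \<in> A \<Longrightarrow> polytope (K i)"
  shows "polytope {sum z A | z. \<forall>i\<in>A. z i \<in> K i}"
  using assms
proof (induction A rule: finite_induct)
  case empty
  then show ?case by (simp add: polytope_sing)
next
  case (insert i A)
  have eq: "{sum z (insert i A) | z. \<forall>j\<in>insert i A. z j \<in> K j}
      = K i + {sum z A | z. \<forall>j\<in>A. z j \<in> K j}"
  proof
    show "{sum z (insert i A) | z. \<forall>j\<in>insert i A. z j \<in> K j} \<subseteq> K i + {sum z A | z. \<forall>j\<in>A. z j \<in> K j}"
      using insert.hyps by (force simp: set_plus_def)
  next
    show "K i + {sum z A | z. \<forall>j\<in>A. z j \<in> K j} \<subseteq> {sum z (insert i A) | z. \<forall>j\<in>insert i A. z j \<in> K j}"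
    proof
      fix v assume "v \<in> K i + {sum z A | z. \<forall>j\<in>A. z j \<in> K j}"
      then obtain a z where a: "a \<in> K i" and z: "\<forall>j\<in>A. z j \<in> K j" and v: "v = a + sum z A"
        by (auto simp: set_plus_def)
      have "sum (z(i := a)) A = sum z A"
        using insert.hyps by (intro sum.cong) auto
      then have "v = sum (z(i := a)) (insert i A)"
        using insert.hyps v by simp
      moreover have "\<forall>j\<in>insert i A. (z(i := a)) j \<in> K j" using a z by auto
      ultimately show "v \<in> {sum z (insert i A) | z. \<forall>j\<in>insert i A. z j \<in> K j}" by blast
    qed
  qed
  show ?case unfolding eq
    using insert by (intro polytope_plus) auto
qed

lemma PG_polytope: "polytope (PG m I y)"
  unfolding PG_def
  by (intro polytope_msum) (auto simp: simplexI_def intro!: polytope_scaling polytope_convex_hull finite_axes)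



lemma PG_elem:
  assumes "v \<in> PG m I y"
  obtains s where "\<forall>i\<in>{1..m}. s i \<in> simplexI (I i)" "v = (\<Sum>i\<in>{1..m}. real (y i) *\<^sub>R s i)"
proof -
  obtain z where v: "v = (\<Sum>i\<in>{1..m}. z i)" and z: "\<forall>i\<in>{1..m}. z i \<in> (\<lambda>v. real (y i) *\<^sub>R v) ` simplexI (I i)"
    using assms unfolding PG_def by blast
  then have "\<forall>i\<in>{1..m}. \<exists>s. s \<in> simplexI (I i) \<and> z i = real (y i) *\<^sub>R s" by blast
  then obtain s where s: "\<forall>i\<in>{1..m}. s i \<in> simplexI (I i) \<and> z i = real (y i) *\<^sub>R s i"
    by metis
  have "v = (\<Sum>i\<in>{1..m}. real (y i) *\<^sub>R s i)" unfolding v using s by (intro sum.cong) auto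
  then show ?thesis using that s by blast
qed

lemma PG_intro:
  assumes "\<forall>i\<in>{1..m}. s i \<in> simplexI (I i)"
  shows "(\<Sum>i\<in>{1..m}. real (y i) *\<^sub>R s i) \<in> PG m I y"
  unfolding PG_def using assms by blast

lemma ind_simplex:
  assumes "s \<in> simplexI J"
  shows "0 \<le> ind S \<bullet> s" "ind S \<bullet> s \<le> 1" "J \<inter> S = {} \<Longrightarrow> ind S \<bullet> s = 0" "ind UNIV \<bullet> s = 1"
proof -
  note p = simplexI_props[OF assms]
  show "0 \<le> ind S \<bullet> s" unfolding ind_inner using p by (simp add: sum_nonneg)
  have "sum (($) s) S \<le> sum (($) s) UNIV" by (rule sum_mono2) (use p in auto)
  then show "ind S \<bullet> s \<le> 1" unfolding ind_inner using p by simp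
  show "J \<inter> S = {} \<Longrightarrow> ind S \<bullet> s = 0" unfolding ind_inner using p
    by (intro sum.neutral) auto
  show "ind UNIV \<bullet> s = 1" unfolding ind_inner using p by simp
qed

lemma fS_alt: "fS m I y S = (\<Sum>i\<in>{1..m}. if I i \<inter> S \<noteq> {} then real (y i) else 0)"
  unfolding fS_def of_nat_sum by (rule sum.inter_filter) simp

lemma PG_bound:
  assumes "v \<in> PG m I y"
  shows "ind S \<bullet> v \<le> fS m I y S"
proof -
  obtain s where s: "\<forall>i\<in>{1..m}. s i \<in> simplexI (I i)" and v: "v = (\<Sum>i\<in>{1..m}. real (y i) *\<^sub>R s i)"
    using assms by (rule PG_elem)
  have "ind S \<bullet> v = (\<Sum>i\<in>{1..m}. real (y i) * (ind S \<bullet> s i))"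
    unfolding v by (simp add: inner_sum_right)
  also have "\<dots> \<le> (\<Sum>i\<in>{1..m}. if I i \<inter> S \<noteq> {} then real (y i) else 0)"
  proof (rule sum_mono)
    fix i assume i: "i \<in> {1..m}"
    show "real (y i) * (ind S \<bullet> s i) \<le> (if I i \<inter> S \<noteq> {} then real (y i) else 0)"
      using ind_simplex(1-3)[OF s[rule_format, OF i], of S]
      by (auto intro: mult_left_le)
  qed
  finally show ?thesis by (simp add: fS_alt)
qed

lemma PG_Hyp:
  assumes "v \<in> PG m I y"
  shows "v \<in> Hyp m y"
proof -
  obtain s where s: "\<forall>i\<in>{1..m}. s i \<in> simplexI (I i)" and v: "v = (\<Sum>i\<in>{1..m}. real (y i) *\<^sub>R s i)"
    using assms by (rule PG_elem)
  have "ind UNIV \<bullet> v = (\<Sum>i\<in>{1..m}. real (y i) * (ind UNIV \<bullet> s i))"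
    unfolding v by (simp add: inner_sum_right)
  also have "\<dots> = (\<Sum>i\<in>{1..m}. real (y i))"
  proof (intro sum.cong refl)
    fix i assume "i \<in> {1..m}"
    then show "real (y i) * (ind UNIV \<bullet> s i) = real (y i)"
      using ind_simplex(4)[OF s[rule_format]] by simp
  qed
  finally show ?thesis unfolding Hyp_eq by simp
qed

lemma fS_le: "fS m I y S \<le> real (\<Sum>j\<in>{1..m}. y j)"
  unfolding fS_def of_nat_le_iff by (rule sum_mono2) auto

lemma fS_Ints: "fS m I y S \<in> \<int>"
  unfolding fS_def by (rule Ints_of_nat)

lemma Hyp_affine: "affine (Hyp m y)"
  unfolding Hyp_eq by (rule affine_hyperplane)

lemma aff_dim_Hyp: "aff_dim (Hyp m y :: (real^'n::finite) set) = int CARD('n) - 1"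
  unfolding Hyp_eq using ind_nz[of "UNIV::'n set"] by simp

lemma aff_dim_Hyp_cut:
  fixes S :: "'n::finite set"
  assumes "S \<noteq> {}" "S \<noteq> UNIV" "Hyp m y \<inter> {x. ind S \<bullet> x = c} \<noteq> {}"
  shows "aff_dim (Hyp m y \<inter> {x. ind S \<bullet> x = c}) = int CARD('n) - 2"
proof -
  obtain h where h: "h \<in> Hyp m y" "ind S \<bullet> h = c" using assms(3) by blast
  obtain k where k: "k \<in> S" using assms(1) by blast
  obtain j where j: "j \<notin> S" using assms(2) by blast
  define h' where "h' = h + axis k 1 - axis j 1"
  have "ind UNIV \<bullet> h' = ind UNIV \<bullet> h"
    unfolding h'_def by (simp add: inner_diff_right inner_add_right ind_def inner_axis)
  then have "h' \<in> Hyp m y" using h(1) unfolding Hyp_eq by simp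
  moreover have "ind S \<bullet> h' = c + 1"
    unfolding h'_def using h k j by (simp add: inner_diff_right inner_add_right ind_def inner_axis)
  ultimately have "\<not> Hyp m y \<subseteq> {x. ind S \<bullet> x = c}" by auto
  moreover have "affine (Hyp m y :: (real^'n) set)" by (rule Hyp_affine)
  moreover have "aff_dim (Hyp m y :: (real^'n) set) = int CARD('n) - 1" by (rule aff_dim_Hyp)
  ultimately show ?thesis
    using aff_dim_affine_Int_hyperplane[where S="Hyp m y" and a="ind S" and b=c] assms(3)
    by simp
qed

lemma aff_hull_PG:
  assumes aff: "aff_dim (PG m I y) = int CARD('n) - 1"
  shows "affine hull (PG m I y) = (Hyp m y :: (real^'n::finite) set)"
proof -
  have ne: "PG m I y \<noteq> {}" using aff by auto
  have sub: "affine hull (PG m I y) \<subseteq> Hyp m y"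
    using PG_Hyp Hyp_affine by (metis hull_minimal subsetI)
  have "aff_dim (Hyp m y :: (real^'n) set) = int CARD('n) - 1" by (rule aff_dim_Hyp)
  then show ?thesis
    by (intro affine_dim_equal) (use ne sub aff Hyp_affine[of m y] in auto)
qed



lemma PG_convex: "convex (PG m I y)"
  using PG_polytope polytope_imp_convex by blast

lemma PG_polyhedron: "polyhedron (PG m I y)"
  using PG_polytope polytope_imp_polyhedron by blast

lemma facet_ind:
  fixes I :: "nat \<Rightarrow> 'n::finite set"
  assumes aff: "aff_dim (PG m I y) = int CARD('n) - 1"
    and F: "F facet_of PG m I y"
  shows "\<exists>S. S \<noteq> {} \<and> S \<noteq> UNIV \<and> F = PG m I y \<inter> {x. ind S \<bullet> x = fS m I y S}"
proof -
  define Q where "Q = PG m I y"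
  obtain a b where a0: "a \<noteq> 0" and Qab: "Q \<subseteq> {x. a \<bullet> x \<le> b}" and Fab: "F = Q \<inter> {x. a \<bullet> x = b}"
    using facet_of_polyhedron[OF PG_polyhedron F] unfolding Q_def by blast
  have Fne: "F \<noteq> {}" and FQ: "F \<noteq> Q" "F \<subseteq> Q" and Fdim: "aff_dim F = aff_dim Q - 1"
    using F unfolding Q_def facet_of_def by (auto dest: face_of_imp_subset)
  define M where "M = Max (range (\<lambda>k. a$k))"
  define S where "S = {k. a$k = M}"
  have aM: "a$k \<le> M" for k unfolding M_def by (rule Max_ge) auto
  have "M \<in> range (\<lambda>k. a$k)" unfolding M_def by (rule Max_in) auto
  then have Sne: "S \<noteq> {}" unfolding S_def by auto
  have SU: "S \<noteq> UNIV"
  proof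
    assume "S = UNIV"
    then have aeq: "a = M *\<^sub>R ind UNIV" unfolding S_def by (auto simp: vec_eq_iff ind_def)
    have const: "a \<bullet> x = M * real (\<Sum>j\<in>{1..m}. y j)" if "x \<in> Q" for x
      using PG_Hyp[of x m I y] that unfolding Q_def Hyp_eq aeq by simp
    obtain x0 where "x0 \<in> F" using Fne by blast
    then have "b = M * real (\<Sum>j\<in>{1..m}. y j)" using const Fab by auto
    then have "F = Q" using const Fab by auto
    then show False using FQ by blast
  qed
  have key: "ind S \<bullet> x = fS m I y S" if xF: "x \<in> F" for x
  proof -
    have xQ: "x \<in> Q" and ax: "a \<bullet> x = b" using xF Fab by auto
    obtain s where s: "\<forall>i\<in>{1..m}. s i \<in> simplexI (I i)" and x: "x = (\<Sum>i\<in>{1..m}. real (y i) *\<^sub>R s i)"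
      using xQ unfolding Q_def by (rule PG_elem)
    define T where "T = {i\<in>{1..m}. I i \<inter> S \<noteq> {}}"
    define kk where "kk i = (SOME k. k \<in> I i \<inter> S)" for i
    have kk: "kk i \<in> I i \<inter> S" if "i \<in> T" for i
    proof -
      have "\<exists>k. k \<in> I i \<inter> S" using that unfolding T_def by auto
      then show ?thesis unfolding kk_def by (rule someI_ex)
    qed
    define s' where "s' i = (if i \<in> T then axis (kk i) 1 else s i)" for i
    have s': "\<forall>i\<in>{1..m}. s' i \<in> simplexI (I i)"
      using s kk axis_in_simplexI unfolding s'_def by auto
    have "(\<Sum>i\<in>{1..m}. real (y i) *\<^sub>R s' i) \<in> Q"
      unfolding Q_def by (rule PG_intro[OF s'])
    then have le: "a \<bullet> (\<Sum>i\<in>{1..m}. real (y i) *\<^sub>R s' i) \<le> a \<bullet> x" using Qab ax by auto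
    have as_le: "a \<bullet> t \<le> M" if "t \<in> simplexI J" for t J
    proof -
      note p = simplexI_props[OF that]
      have "a \<bullet> t = (\<Sum>k\<in>UNIV. a$k * t$k)" by (simp add: inner_vec_def)
      also have "\<dots> \<le> (\<Sum>k\<in>UNIV. M * t$k)"
        using p aM by (intro sum_mono mult_right_mono) auto
      also have "\<dots> = M" using p by (simp add: sum_distrib_left[symmetric])
      finally show ?thesis .
    qed
    have "a \<bullet> (\<Sum>i\<in>{1..m}. real (y i) *\<^sub>R s' i) - a \<bullet> x
        = (\<Sum>i\<in>{1..m}. real (y i) * (a \<bullet> s' i - a \<bullet> s i))"
      unfolding x by (simp add: inner_sum_right sum_subtractf algebra_simps)
    also have "\<dots> = (\<Sum>i\<in>{1..m}. if i \<in> T then real (y i) * (M - a \<bullet> s i) else 0)"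
      using kk by (intro sum.cong refl) (auto simp: s'_def inner_axis S_def)
    finally have sumle: "(\<Sum>i\<in>{1..m}. if i \<in> T then real (y i) * (M - a \<bullet> s i) else 0) \<le> 0"
      using le by linarith
    have nn: "\<forall>i\<in>{1..m}. 0 \<le> (if i \<in> T then real (y i) * (M - a \<bullet> s i) else 0)"
      using s as_le by auto
    define g where "g i = (if i \<in> T then real (y i) * (M - a \<bullet> s i) else 0)" for i
    have nn': "\<And>i. i \<in> {1..m} \<Longrightarrow> 0 \<le> g i" using nn unfolding g_def by blast
    have "sum g {1..m} = 0" using sumle sum_nonneg[of "{1..m}" g, OF nn'] unfolding g_def by linarith
    then have "\<forall>i\<in>{1..m}. g i = 0" using sum_nonneg_eq_0_iff[of "{1..m}" g] nn' by auto
    then have zero: "(if i \<in> T then real (y i) * (M - a \<bullet> s i) else 0) = 0" if "i \<in> {1..m}" for i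
      using that unfolding g_def by blast
    have term_eq: "real (y i) * (ind S \<bullet> s i) = (if I i \<inter> S \<noteq> {} then real (y i) else 0)"
      if i: "i \<in> {1..m}" for i
    proof (cases "I i \<inter> S = {}")
      case True
      then show ?thesis using ind_simplex(3)[OF s[rule_format, OF i]] by simp
    next
      case False
      then have iT: "i \<in> T" using i unfolding T_def by auto
      show ?thesis
      proof (cases "y i = 0")
        case True then show ?thesis by simp
      next
        case False
        then have asM: "a \<bullet> s i = M" using zero[OF i] iT by simp
        note p = simplexI_props[OF s[rule_format, OF i]]
        have "(\<Sum>k\<in>UNIV. s i $ k * (M - a$k)) = M * (\<Sum>k\<in>UNIV. s i $ k) - a \<bullet> s i"
          by (simp add: inner_vec_def algebra_simps sum_subtractf sum_distrib_left)
        also have "\<dots> = 0" using p asM by simp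
        finally have "(\<Sum>k\<in>UNIV. s i $ k * (M - a$k)) = 0" .
        moreover have "\<forall>k\<in>UNIV. 0 \<le> s i $ k * (M - a$k)" using p aM by auto
        ultimately have "\<forall>k\<in>UNIV. s i $ k * (M - a$k) = 0"
          using sum_nonneg_eq_0_iff[of UNIV "\<lambda>k. s i $ k * (M - a$k)"] by auto
        then have s0: "s i $ k = 0" if "k \<notin> S" for k
          using that aM[of k] unfolding S_def by auto
        have "ind S \<bullet> s i = (\<Sum>k\<in>UNIV. s i $ k)"
          unfolding ind_inner using s0 by (intro sum.mono_neutral_left) auto
        then show ?thesis using p \<open>I i \<inter> S \<noteq> {}\<close> by simp
      qed
    qed
    have "ind S \<bullet> x = (\<Sum>i\<in>{1..m}. real (y i) * (ind S \<bullet> s i))"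
      unfolding x by (simp add: inner_sum_right)
    also have "\<dots> = fS m I y S"
      unfolding fS_alt using term_eq by (intro sum.cong) auto
    finally show ?thesis .
  qed
  define G where "G = Q \<inter> {x. ind S \<bullet> x = fS m I y S}"
  have Gface: "G face_of Q"
    unfolding G_def Q_def by (rule face_of_Int_supporting_hyperplane_le) (auto simp: PG_convex PG_bound)
  have FG: "F \<subseteq> G" using key FQ unfolding G_def by auto
  have GQ: "G \<noteq> Q"
  proof
    assume GQ: "G = Q"
    have "Q \<subseteq> Hyp m y \<inter> {x. ind S \<bullet> x = fS m I y S}"
      using GQ PG_Hyp unfolding G_def Q_def by blast
    moreover have "Hyp m y \<inter> {x. ind S \<bullet> x = fS m I y S} \<noteq> {}"
      using calculation Fne FQ by blast
    ultimately have "aff_dim Q \<le> int CARD('n) - 2"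
      using aff_dim_Hyp_cut[OF Sne SU] aff_dim_subset by metis
    then show False using aff unfolding Q_def by simp
  qed
  have "F = G"
  proof (rule ccontr)
    assume "F \<noteq> G"
    have "F face_of G" using F FG Gface unfolding Q_def
      by (meson face_of_subset facet_of_imp_face_of face_of_imp_subset)
    then have "aff_dim F < aff_dim G"
      using face_of_aff_dim_lt \<open>F \<noteq> G\<close> Gface
      by (metis convex_Int convex_hyperplane PG_convex G_def Q_def)
    moreover have "aff_dim G < aff_dim Q"
      using face_of_aff_dim_lt[OF _ Gface GQ] PG_convex unfolding Q_def by blast
    ultimately show False using Fdim by simp
  qed
  then show ?thesis using Sne SU unfolding G_def Q_def by blast
qed



lemma propor:
  fixes I :: "nat \<Rightarrow> 'n::finite set"
  assumes aff: "aff_dim (PG m I y) = int CARD('n) - 1"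
    and F: "F facet_of PG m I y"
    and Sne: "S \<noteq> {}" and SU: "S \<noteq> UNIV"
    and FS: "F = PG m I y \<inter> {x. ind S \<bullet> x = fS m I y S}"
    and Qab: "PG m I y \<subseteq> {x. a \<bullet> x \<le> b}"
    and Fab: "F = PG m I y \<inter> {x. a \<bullet> x = b}"
  shows "\<exists>l>0. \<forall>v\<in>Hyp m y. a \<bullet> v - b = l * (ind S \<bullet> v - fS m I y S)"
proof -
  define Q where "Q = PG m I y"
  define f where "f = fS m I y S"
  define L where "L = Hyp m y \<inter> {x. ind S \<bullet> x = f}"
  have Fne: "F \<noteq> {}" and FQ: "F \<noteq> Q" "F \<subseteq> Q" and Fdim: "aff_dim F = aff_dim Q - 1"
    using F unfolding Q_def facet_of_def by (auto dest: face_of_imp_subset)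
  have FL: "F \<subseteq> L" using FS PG_Hyp unfolding L_def f_def by blast
  have Laff: "affine L" unfolding L_def by (intro affine_Int Hyp_affine affine_hyperplane)
  have Ldim: "aff_dim L = int CARD('n) - 2"
    unfolding L_def by (rule aff_dim_Hyp_cut[OF Sne SU]) (use FL Fne in \<open>auto simp: L_def\<close>)
  have hullL: "affine hull F = L"
  proof (rule affine_dim_equal)
    show "affine hull F \<subseteq> L" using FL Laff by (rule hull_minimal)
    show "aff_dim (affine hull F) = aff_dim L" using Fdim aff Ldim unfolding Q_def by simp
  qed (use Fne Laff in auto)
  have Lab: "L \<subseteq> {x. a \<bullet> x = b}"
    unfolding hullL[symmetric] using Fab by (intro hull_minimal affine_hyperplane) auto
  obtain q where q: "q \<in> F" using Fne by blast
  obtain u where u: "u \<in> Q" "u \<notin> F" using FQ by blast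
  have qS: "ind S \<bullet> q = f" and qa: "a \<bullet> q = b" and qH: "q \<in> Hyp m y"
    using q FS Fab PG_Hyp unfolding f_def by auto
  have uS: "ind S \<bullet> u < f" using u PG_bound[of u m I y S] FS unfolding Q_def f_def by fastforce
  have ua: "a \<bullet> u < b" using u Qab Fab unfolding Q_def by fastforce
  have uH: "u \<in> Hyp m y" using u PG_Hyp unfolding Q_def by blast
  define l where "l = (a \<bullet> u - b) / (ind S \<bullet> u - f)"
  have lpos: "l > 0" unfolding l_def using uS ua by (intro divide_neg_neg) auto
  have "a \<bullet> v - b = l * (ind S \<bullet> v - f)" if vH: "v \<in> Hyp m y" for v
  proof -
    define t where "t = (ind S \<bullet> v - f) / (ind S \<bullet> u - f)"
    define v' where "v' = v - t *\<^sub>R (u - q)"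
    have "ind UNIV \<bullet> v' = ind UNIV \<bullet> v"
      using uH qH unfolding v'_def Hyp_eq by (simp add: inner_diff_right)
    then have "v' \<in> Hyp m y" using vH unfolding Hyp_eq by simp
    moreover have "ind S \<bullet> v' = f"
    proof -
      have "ind S \<bullet> v' = ind S \<bullet> v - t * (ind S \<bullet> u - f)"
        unfolding v'_def using qS by (simp add: inner_diff_right)
      also have "t * (ind S \<bullet> u - f) = ind S \<bullet> v - f"
        unfolding t_def using uS by simp
      finally show ?thesis by simp
    qed
    ultimately have "v' \<in> L" unfolding L_def by blast
    then have "a \<bullet> v' = b" using Lab by blast
    then have "a \<bullet> v - t * (a \<bullet> u - b) = b"
      unfolding v'_def using qa by (simp add: inner_diff_right)
    then have "a \<bullet> v - b = t * (a \<bullet> u - b)" by simp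
    also have "\<dots> = l * (ind S \<bullet> v - f)"
      unfolding t_def l_def by simp
    finally show ?thesis .
  qed
  then show ?thesis using lpos unfolding f_def by blast
qed



lemma ind_w:
  fixes k1 :: "'n::finite"
  shows "ind S \<bullet> infty1 m y c k1 = (if k1 \<in> S
     then real (\<Sum>j\<in>{1..m}. y j) + (real CARD('n) - 1) * c - (real (card S) - 1) * c
     else - c * real (card S))"
proof (cases "k1 \<in> S")
  case True
  have "ind S \<bullet> infty1 m y c k1 = (\<Sum>k\<in>S. infty1 m y c k1 $ k)" by (rule ind_inner)
  also have "\<dots> = infty1 m y c k1 $ k1 + (\<Sum>k\<in>S - {k1}. infty1 m y c k1 $ k)"
    using True by (simp add: sum.remove)
  also have "(\<Sum>k\<in>S - {k1}. infty1 m y c k1 $ k) = (\<Sum>k\<in>S - {k1}. - c)"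
    by (intro sum.cong) (auto simp: infty1_def)
  also have "\<dots> = - c * (real (card S) - 1)"
  proof -
    have "card S \<ge> 1" using True by (metis card_0_eq finite empty_iff less_one not_le)
    then show ?thesis using True by (simp add: card_Diff_singleton of_nat_diff)
  qed
  finally show ?thesis using True by (simp add: infty1_def algebra_simps)
next
  case False
  have "ind S \<bullet> infty1 m y c k1 = (\<Sum>k\<in>S. infty1 m y c k1 $ k)" by (rule ind_inner)
  also have "\<dots> = (\<Sum>k\<in>S. - c)"
    using False by (intro sum.cong) (auto simp: infty1_def)
  finally show ?thesis using False by simp
qed

lemma w_Hyp:
  fixes k1 :: "'n::finite"
  shows "infty1 m y c k1 \<in> Hyp m y"
  unfolding Hyp_eq using ind_w[where S=UNIV, of m y c k1] by simp

lemma ind_axis: "ind S \<bullet> (p + axis k 1) = ind S \<bullet> p + (if k \<in> S then 1 else 0)"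
  by (simp add: inner_add_right ind_def inner_axis)

lemma ind_Ints: "(\<forall>k. p $ k \<in> \<int>) \<Longrightarrow> ind S \<bullet> p \<in> \<int>"
  unfolding ind_inner by (intro Ints_sum) auto



theorem mainTheorem4:
  fixes m :: nat and I :: "nat \<Rightarrow> 'n::finite set" and y :: "nat \<Rightarrow> nat" and k1 :: 'n
  assumes "m \<ge> 1"
    and "\<forall>i\<in>{1..m}. I i \<noteq> {}"
    and "\<forall>k. \<exists>i\<in>{1..m}. k \<in> I i"
    and "aff_dim (PG m I y) = int CARD('n) - 1"
  shows "\<exists>c0. \<forall>c>c0. \<forall>p :: real^'n. (\<forall>k. p $ k \<in> \<int>) \<longrightarrow>
           (p \<in> PG_trim m I y \<longleftrightarrow>
            good_point (Hyp m y) (infty1 m y c k1) (PG m I y) (p + axis k1 1))"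
proof (intro exI[of _ 0] allI impI)
  note aff = assms(4)
  fix c :: real and p :: "real^'n"
  assume c: "c > 0" and pint: "\<forall>k. p $ k \<in> \<int>"
  define Q where "Q = PG m I y"
  define H where "H = (Hyp m y :: (real^'n) set)"
  define w where "w = infty1 m y c k1"
  define x where "x = p + axis k1 (1::real)"
  have QH: "Q \<subseteq> H" using PG_Hyp unfolding Q_def H_def by blast
  have wH: "w \<in> H" unfolding w_def H_def by (rule w_Hyp)
  have trim_iff: "p \<in> PG_trim m I y \<longleftrightarrow> (\<forall>k. p + axis k 1 \<in> Q)"
  proof
    assume "p \<in> PG_trim m I y"
    then show "\<forall>k. p + axis k 1 \<in> Q"
      unfolding PG_trim_def Q_def using axis_in_simplexI[of _ UNIV] by blast
  next
    assume pk: "\<forall>k. p + axis k 1 \<in> Q"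
    have "convex hull ((\<lambda>v. p + v) ` {axis k 1 | k. k \<in> (UNIV::'n set)}) \<subseteq> Q"
      using pk unfolding Q_def by (intro hull_minimal PG_convex) auto
    then show "p \<in> PG_trim m I y"
      unfolding PG_trim_def simplexI_def convex_hull_translation Q_def by blast
  qed
  show "p \<in> PG_trim m I y \<longleftrightarrow> good_point (Hyp m y) (infty1 m y c k1) (PG m I y) (p + axis k1 1)"
    unfolding trim_iff H_def[symmetric] w_def[symmetric] Q_def[symmetric] x_def[symmetric]
  proof
    assume pk: "\<forall>k. p + axis k 1 \<in> Q"
    have xQ: "x \<in> Q" using pk unfolding x_def by blast
    have "x \<notin> F" if pos: "positive_facet H w Q F" for F
    proof
      assume xF: "x \<in> F"
      have F: "F facet_of Q" and nneg: "\<not> negative_facet H w Q F"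
        using pos unfolding positive_facet_def by auto
      obtain S where Sne: "S \<noteq> {}" and SU: "S \<noteq> UNIV" and FS: "F = Q \<inter> {x. ind S \<bullet> x = fS m I y S}"
        using facet_ind[OF aff F[unfolded Q_def]] unfolding Q_def by blast
      have xS: "ind S \<bullet> x = fS m I y S" using xF FS by blast
      have k1S: "k1 \<in> S"
      proof (rule ccontr)
        assume "k1 \<notin> S"
        obtain k where "k \<in> S" using Sne by blast
        then have "ind S \<bullet> (p + axis k 1) = fS m I y S + 1"
          using xS \<open>k1 \<notin> S\<close> unfolding x_def ind_axis by simp
        moreover have "ind S \<bullet> (p + axis k 1) \<le> fS m I y S"
          using pk PG_bound unfolding Q_def by blast
        ultimately show False by simp
      qed
      have "negative_facet H w Q F"
        unfolding negative_facet_def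
      proof (intro conjI exI[of _ "ind S"] exI[of _ "fS m I y S"])
        show "F facet_of Q" by (rule F)
        have xin: "x \<in> H \<inter> {v. ind S \<bullet> v = fS m I y S}" using xQ QH xS by blast
        show "aff_dim (H \<inter> {v. ind S \<bullet> v = fS m I y S}) = aff_dim H - 1"
        proof -
          have "aff_dim H = int CARD('n) - 1" unfolding H_def by (rule aff_dim_Hyp)
          then show ?thesis using xin aff_dim_Hyp_cut[OF Sne SU, of m y] unfolding H_def by auto
        qed
        show "Q \<subseteq> {v. ind S \<bullet> v \<le> fS m I y S}" using PG_bound unfolding Q_def by blast
        show "F = Q \<inter> {v. ind S \<bullet> v = fS m I y S}" by (rule FS)
        show "rel_interior Q \<subseteq> {v. ind S \<bullet> v < fS m I y S}"
        proof
          fix v assume v: "v \<in> rel_interior Q"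
          then have vQ: "v \<in> Q" using rel_interior_subset by blast
          have "F \<inter> rel_interior Q = {}"
            using face_of_disjoint_rel_interior[OF facet_of_imp_face_of[OF F]] F facet_of_irrefl by metis
          then have "v \<notin> F" using v by blast
          then show "v \<in> {v. ind S \<bullet> v < fS m I y S}"
            using vQ FS PG_bound[of v m I y S] unfolding Q_def by fastforce
        qed
        have "card S < CARD('n)" using SU by (intro psubset_card_mono) auto
        then have "real (card S) \<le> real CARD('n) - 1" by linarith
        then have "c * (1 + real (card S)) \<le> c * real CARD('n)"
          using c by (intro mult_left_mono) auto
        then have "ind S \<bullet> w \<ge> real (\<Sum>j\<in>{1..m}. y j) + c"
          unfolding w_def ind_w using k1S c by (simp add: algebra_simps)
        then show "ind S \<bullet> w > fS m I y S" using fS_le[of m I y S] c by linarith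
      qed
      then show False using nneg by blast
    qed
    then show "good_point H w Q x" unfolding good_point_def using xQ by blast
  next
    assume good: "good_point H w Q x"
    have xQ: "x \<in> Q" and nopos: "\<And>F. positive_facet H w Q F \<Longrightarrow> x \<notin> F"
      using good unfolding good_point_def by auto
    show "\<forall>k. p + axis k 1 \<in> Q"
    proof (rule allI, rule ccontr)
      fix k
      define z where "z = p + axis k (1::real)"
      assume "p + axis k 1 \<notin> Q"
      then have zQ: "z \<notin> Q" unfolding z_def .
      then have kk1: "k \<noteq> k1" using xQ unfolding x_def z_def by blast
      have "ind UNIV \<bullet> z = ind UNIV \<bullet> x" unfolding x_def z_def ind_axis by simp
      then have zH: "z \<in> H" using xQ QH unfolding H_def Hyp_eq by auto
      obtain FF where FF: "finite FF" and Qeq: "Q = affine hull Q \<inter> \<Inter>FF"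
        and FFh: "\<forall>h\<in>FF. \<exists>a b. a \<noteq> 0 \<and> h = {x. a \<bullet> x \<le> b}"
        and FFmin: "\<forall>F'. F' \<subset> FF \<longrightarrow> Q \<subset> affine hull Q \<inter> \<Inter>F'"
        using PG_polyhedron[of m I y] unfolding polyhedron_Int_affine_minimal Q_def by blast
      obtain aa bb where aabb: "\<forall>h\<in>FF. aa h \<noteq> 0 \<and> h = {x. aa h \<bullet> x \<le> bb h}"
        using FFh by metis
      have hullQ: "affine hull Q = H" unfolding Q_def H_def by (rule aff_hull_PG[OF aff])
      obtain h where hF: "h \<in> FF" and zh: "z \<notin> h" using Qeq zQ zH hullQ by blast
      define C where "C = Q \<inter> {x. aa h \<bullet> x = bb h}"
      have C: "C facet_of Q"
        unfolding C_def
        by (subst facet_of_polyhedron_explicit[OF FF Qeq, of aa bb]) (use aabb FFmin hF in auto)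
      have Qh: "Q \<subseteq> {x. aa h \<bullet> x \<le> bb h}" using Qeq hF aabb by blast
      have "h = {x. aa h \<bullet> x \<le> bb h}" using hF aabb by blast
      then have "z \<notin> {x. aa h \<bullet> x \<le> bb h}" using zh by metis
      then have zgt: "aa h \<bullet> z > bb h" by simp
      obtain S where Sne: "S \<noteq> {}" and SU: "S \<noteq> UNIV" and CS: "C = Q \<inter> {x. ind S \<bullet> x = fS m I y S}"
        using facet_ind[OF aff C[unfolded Q_def]] unfolding Q_def by blast
      obtain l where l: "l > 0" "\<forall>v\<in>H. aa h \<bullet> v - bb h = l * (ind S \<bullet> v - fS m I y S)"
        using propor[OF aff C[unfolded Q_def] Sne SU CS[unfolded Q_def] Qh[unfolded Q_def] C_def[unfolded Q_def]]
        unfolding H_def by blast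
      have zS: "ind S \<bullet> z > fS m I y S"
        using l zH zgt by (metis diff_gt_0_iff_gt zero_less_mult_pos)
      have xS: "ind S \<bullet> x \<le> fS m I y S" using xQ PG_bound unfolding Q_def by blast
      obtain ip where ip: "ind S \<bullet> p = of_int ip" using ind_Ints[OF pint, of S] Ints_cases by metis
      obtain jf where jf: "fS m I y S = of_int jf" using fS_Ints Ints_cases by metis
      have k1S: "k1 \<notin> S" and fx: "ind S \<bullet> x = fS m I y S"
      proof -
        have zz: "ind S \<bullet> z = of_int ip + (if k \<in> S then 1 else 0)" unfolding z_def ind_axis ip ..
        have xx: "ind S \<bullet> x = of_int ip + (if k1 \<in> S then 1 else 0)" unfolding x_def ind_axis ip ..
        have "k \<in> S" using zz xx zS xS by (auto split: if_splits)
        moreover then show "k1 \<notin> S" using zz xx zS xS by (auto split: if_splits)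
        ultimately have "of_int ip + 1 > (of_int jf :: real)" "(of_int ip :: real) \<le> of_int jf"
          using zz xx zS xS jf by auto
        then have "ip + 1 > jf" "ip \<le> jf" by linarith+
        then have "ip = jf" by linarith
        then show "ind S \<bullet> x = fS m I y S" using xx \<open>k1 \<notin> S\<close> jf by simp
      qed
      have xC: "x \<in> C" using xQ fx CS by blast
      have "\<not> positive_facet H w Q C" using nopos xC by blast
      then have "negative_facet H w Q C" using C unfolding positive_facet_def by blast
      then obtain a b where Qab: "Q \<subseteq> {x. a \<bullet> x \<le> b}" and Cab: "C = Q \<inter> {x. a \<bullet> x = b}" and wab: "a \<bullet> w > b"
        unfolding negative_facet_def by blast
      obtain l' where l': "l' > 0" "\<forall>v\<in>H. a \<bullet> v - b = l' * (ind S \<bullet> v - fS m I y S)"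
        using propor[OF aff C[unfolded Q_def] Sne SU CS[unfolded Q_def] Qab[unfolded Q_def] Cab[unfolded Q_def]]
        unfolding H_def by blast
      have "ind S \<bullet> w = - c * real (card S)" unfolding w_def ind_w using k1S by simp
      moreover have "card S > 0" using Sne by (simp add: card_gt_0_iff)
      ultimately have "ind S \<bullet> w < 0" using c by (simp add: mult_pos_pos)
      moreover have "fS m I y S \<ge> 0" unfolding fS_def by (rule of_nat_0_le_iff)
      ultimately have "a \<bullet> w - b < 0" using l' wH by (simp add: mult_pos_neg)
      then show False using wab by simp
    qed
  qed
qed

end
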